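(* Let $r_2$ be an admissible trajectory and $\tau,T,e=(e_1,e_2,e_3),u,z$ the fundamental fields on $G$. Then on $G$ $$\frac{\partial(\tau,T,e_1,e_2)}{\partial(t,x_1,x_2,x_3)}=z\,u^2\,e_3,$$ where $x_1,x_2,x_3$ are the coordinates of $r_1$. In particular this Jacobian is nonzero wherever $e_3\neq0$; analogous statements hold with $(e_1,e_2)$ replaced by any two of the three components of $e$.
   Context: Units with $c=1$. A function $r_2:\mathbb R\to\mathbb R^3$ is an admissible trajectory if it has continuous derivatives up to order 3, $|\dot r_2(t)|<1$ for all $t$, and for every $t_1$ one has $\sup_{u\le t_1}|\dot r_2(u)|<1$ and $\sup_{u\le t_1}|\ddot r_2(u)|<\infty$. The retarded time $\tau(r_1,t)$ is the unique $\tau\le t$ with $\tau=t-|r_1-r_2(\tau)|$; $T=t-\tau$; $G=\{(r_1,t):T(r_1,t)>0\}$; on $G$: $u=1/T$, $e=u(r_1-r_2(\tau))$, $v=\dot r_2\circ\tau$, $z=(1-\langle e,v\rangle)^{-1}$. *)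

theory Defs
  imports "HOL-Analysis.Analysis"
begin

text \<open>Units with c = 1. Trajectories r2 : R -> R^3.\<close>

definition admissible :: "(real \<Rightarrow> real^3) \<Rightarrow> bool" where
  "admissible r2 \<longleftrightarrow>
     (\<exists>v a j.
        (\<forall>t. (r2 has_vector_derivative v t) (at t)) \<and>
        (\<forall>t. (v has_vector_derivative a t) (at t)) \<and>
        (\<forall>t. (a has_vector_derivative j t) (at t)) \<and>
        continuous_on UNIV j \<and>
        (\<forall>t. norm (v t) < 1) \<and>
        (\<forall>t1. (\<exists>M<1. \<forall>s\<le>t1. norm (v s) \<le> M)) \<and>
        (\<forall>t1. (\<exists>B. \<forall>s\<le>t1. norm (a s) \<le> B)))"

definition ret_time :: "(real \<Rightarrow> real^3) \<Rightarrow> real^3 \<Rightarrow> real \<Rightarrow> real" where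
  "ret_time r2 r1 t = (THE \<tau>. \<tau> \<le> t \<and> \<tau> = t - norm (r1 - r2 \<tau>))"

definition retT :: "(real \<Rightarrow> real^3) \<Rightarrow> real^3 \<Rightarrow> real \<Rightarrow> real" where
  "retT r2 r1 t = t - ret_time r2 r1 t"

definition regionG :: "(real \<Rightarrow> real^3) \<Rightarrow> ((real^3) \<times> real) set" where
  "regionG r2 = {(r1, t). retT r2 r1 t > 0}"

definition field_u :: "(real \<Rightarrow> real^3) \<Rightarrow> real^3 \<Rightarrow> real \<Rightarrow> real" where
  "field_u r2 r1 t = 1 / retT r2 r1 t"

definition field_e :: "(real \<Rightarrow> real^3) \<Rightarrow> real^3 \<Rightarrow> real \<Rightarrow> real^3" where
  "field_e r2 r1 t = field_u r2 r1 t *\<^sub>R (r1 - r2 (ret_time r2 r1 t))"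

definition field_v :: "(real \<Rightarrow> real^3) \<Rightarrow> real^3 \<Rightarrow> real \<Rightarrow> real^3" where
  "field_v r2 r1 t = vector_derivative r2 (at (ret_time r2 r1 t))"

definition field_z :: "(real \<Rightarrow> real^3) \<Rightarrow> real^3 \<Rightarrow> real \<Rightarrow> real" where
  "field_z r2 r1 t = 1 / (1 - field_e r2 r1 t \<bullet> field_v r2 r1 t)"

text \<open>Coordinates of a point of R^4, ordered (t, x1, x2, x3).\<close>
definition vec4 :: "real \<Rightarrow> real \<Rightarrow> real \<Rightarrow> real \<Rightarrow> real^4" where
  "vec4 a b c d = (\<chi> i. if i = 1 then a else if i = 2 then b else if i = 3 then c else d)"

definition space_part :: "real^4 \<Rightarrow> real^3" where
  "space_part p = (\<chi> i. if i = 1 then p$2 else if i = 2 then p$3 else p$4)"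

definition time_part :: "real^4 \<Rightarrow> real" where
  "time_part p = p$1"

definition PhiMap :: "(real \<Rightarrow> real^3) \<Rightarrow> real^4 \<Rightarrow> real^4" where
  "PhiMap r2 p = (let r1 = space_part p; t = time_part p in
     vec4 (ret_time r2 r1 t) (retT r2 r1 t) (field_e r2 r1 t $ 1) (field_e r2 r1 t $ 2))"

end

theory Submission
  imports Defs
begin

lemma det_4:
  "det (A::'a::comm_ring_1^4^4) = A$1$1 * A$2$2 * A$3$3 * A$4$4 - A$1$1 * A$2$2 * A$3$4 * A$4$3 - A$1$1 * A$2$3 * A$3$2 * A$4$4 + A$1$1 * A$2$3 * A$3$4 * A$4$2 + A$1$1 * A$2$4 * A$3$2 * A$4$3 - A$1$1 * A$2$4 * A$3$3 * A$4$2 - A$1$2 * A$2$1 * A$3$3 * A$4$4 + A$1$2 * A$2$1 * A$3$4 * A$4$3 + A$1$2 * A$2$3 * A$3$1 * A$4$4 - A$1$2 * A$2$3 * A$3$4 * A$4$1 - A$1$2 * A$2$4 * A$3$1 * A$4$3 + A$1$2 * A$2$4 * A$3$3 * A$4$1 + A$1$3 * A$2$1 * A$3$2 * A$4$4 - A$1$3 * A$2$1 * A$3$4 * A$4$2 - A$1$3 * A$2$2 * A$3$1 * A$4$4 + A$1$3 * A$2$2 * A$3$4 * A$4$1 + A$1$3 * A$2$4 * A$3$1 * A$4$2 - A$1$3 * A$2$4 * A$3$2 * A$4$1 - A$1$4 * A$2$1 * A$3$2 * A$4$3 + A$1$4 * A$2$1 * A$3$3 * A$4$2 + A$1$4 *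 A$2$2 * A$3$1 * A$4$3 - A$1$4 * A$2$2 * A$3$3 * A$4$1 - A$1$4 * A$2$3 * A$3$1 * A$4$2 + A$1$4 * A$2$3 * A$3$2 * A$4$1"
proof -
  have f1: "finite {2::4, 3, 4}" "1 \<notin> {2::4, 3, 4}" by auto
  have f2: "finite {3::4, 4}" "2 \<notin> {3::4, 4}" by auto
  have f3: "finite {4::4}" "3 \<notin> {4::4}" by auto
  show ?thesis
    unfolding det_def UNIV_4
    unfolding sum_over_permutations_insert[OF f1]
    unfolding sum_over_permutations_insert[OF f2]
    unfolding sum_over_permutations_insert[OF f3]
    unfolding permutes_sing
    by (simp add: sign_swap_id permutation_swap_id sign_compose permutation_compose swap_id_eq algebra_simps)
qed

lemma vec4_nth [simp]: "vec4 a b c d $ 1 = a" "vec4 a b c d $ 2 = b" "vec4 a b c d $ 3 = c" "vec4 a b c d $ 4 = d"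
  by (simp_all add: vec4_def)

lemma vec4_alt: "vec4 a b c d = a *\<^sub>R axis 1 1 + b *\<^sub>R axis 2 1 + c *\<^sub>R axis 3 1 + d *\<^sub>R axis 4 1"
  by (simp add: vec_eq_iff forall_4 axis_def vec4_def)

lemma vec4_eta: "vec4 (p$1) (p$2) (p$3) (p$4) = p"
  by (simp add: vec_eq_iff forall_4)

lemma space_part_nth [simp]: "space_part p $ 1 = p$2" "space_part p $ 2 = p$3" "space_part p $ 3 = p$4"
  by (simp_all add: space_part_def)

lemma space_part_vec4: "space_part (vec4 a b c d) = (\<chi> i. if i = 1 then b else if i = 2 then c else d)"
  by (simp add: vec_eq_iff space_part_def vec4_def)

lemma bounded_linear_space_part: "bounded_linear space_part"
proof -
  have "linear space_part"
    by (rule linearI) (simp_all add: vec_eq_iff space_part_def)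
  then show ?thesis by (simp add: linear_conv_bounded_linear)
qed

lemma has_derivative_vec4:
  assumes "(f1 has_derivative f1') F" "(f2 has_derivative f2') F" "(f3 has_derivative f3') F" "(f4 has_derivative f4') F"
  shows "((\<lambda>x. vec4 (f1 x) (f2 x) (f3 x) (f4 x)) has_derivative (\<lambda>h. vec4 (f1' h) (f2' h) (f3' h) (f4' h))) F"
  unfolding vec4_alt
  by (intro has_derivative_add bounded_linear.has_derivative[OF bounded_linear_scaleR_left] assms)

lemma lip_bound:
  fixes r2 :: "real \<Rightarrow> real^3"
  assumes der: "\<And>s. (r2 has_vector_derivative v s) (at s)"
    and M: "\<And>s. s \<le> t1 \<Longrightarrow> norm (v s) \<le> M" and ab: "a \<le> t1" "b \<le> t1"
  shows "norm (r2 b - r2 a) \<le> M * norm (b - a)"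
proof (rule differentiable_bound[of "{..t1}" r2 "\<lambda>s h. h *\<^sub>R v s" M b a])
  show "convex {..t1}" by simp
  show "(r2 has_derivative (\<lambda>h. h *\<^sub>R v s)) (at s within {..t1})" if "s \<in> {..t1}" for s
    using der[of s] by (simp add: has_vector_derivative_def has_derivative_at_withinI)
  show "onorm (\<lambda>h. h *\<^sub>R v s) \<le> M" if "s \<in> {..t1}" for s
    using onorm_scaleR_left[OF bounded_linear_ident, of "v s"] M[of s] that by (simp add: onorm_id)
qed (use ab in auto)

lemma ret_unique:
  fixes r2 :: "real \<Rightarrow> real^3"
  assumes der: "\<And>s. (r2 has_vector_derivative v s) (at s)"
    and M: "\<And>s. s \<le> t \<Longrightarrow> norm (v s) \<le> M" "M < 1"
    and a: "\<tau>a \<le> t" "\<tau>a = t - norm (x - r2 \<tau>a)"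
    and b: "\<tau>b \<le> t" "\<tau>b = t - norm (x - r2 \<tau>b)"
  shows "\<tau>a = \<tau>b"
proof -
  have key: "False" if "p \<le> t" "p = t - norm (x - r2 p)" "q \<le> t" "q = t - norm (x - r2 q)" "p < q" for p q
  proof -
    have "q - p = norm (x - r2 p) - norm (x - r2 q)" using that by linarith
    also have "\<dots> \<le> norm ((x - r2 p) - (x - r2 q))" by (rule norm_triangle_ineq2)
    also have "(x - r2 p) - (x - r2 q) = r2 q - r2 p" by simp
    also have "norm (r2 q - r2 p) \<le> M * norm (q - p)"
      by (rule lip_bound[OF der M(1)]) (use that in auto)
    finally have "q - p \<le> M * (q - p)" using that by simp
    then show False using that M(2)
      by (metis diff_gt_0_iff_gt linorder_not_le mult_less_cancel_right2)
  qed
  show ?thesis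
    using key[OF a b] key[OF b a] by (cases \<tau>a \<tau>b rule: linorder_cases) auto
qed

lemma ret_exists:
  fixes r2 :: "real \<Rightarrow> real^3"
  assumes der: "\<And>s. (r2 has_vector_derivative v s) (at s)"
    and M: "\<And>s. s \<le> t \<Longrightarrow> norm (v s) \<le> M" "M < 1"
  shows "\<exists>\<tau>. \<tau> \<le> t \<and> \<tau> = t - norm (x - r2 \<tau>)"
proof -
  define h where "h = (\<lambda>s. s + norm (x - r2 s) - t)"
  define d where "d = norm (x - r2 t) / (1 - M)"
  have d0: "d \<ge> 0" using M(2) by (simp add: d_def)
  have cont: "isCont h s" for s
  proof -
    have "isCont r2 s" using der[of s] has_vector_derivative_continuous by blast
    then show ?thesis unfolding h_def by (intro continuous_intros)
  qed
  have "h (t - d) \<le> 0"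
  proof -
    have "norm (x - r2 (t - d)) \<le> norm (x - r2 t) + norm (r2 t - r2 (t - d))"
      by (metis diff_add_cancel norm_triangle_ineq add.commute diff_add_eq)
    also have "norm (r2 t - r2 (t - d)) \<le> M * norm (t - (t - d))"
      by (rule lip_bound[OF der M(1)]) (use d0 in auto)
    finally have "norm (x - r2 (t - d)) \<le> norm (x - r2 t) + M * d" using d0 by simp
    moreover have "norm (x - r2 t) = (1 - M) * d" using M(2) by (simp add: d_def)
    ultimately show ?thesis unfolding h_def by (simp add: algebra_simps)
  qed
  moreover have "0 \<le> h t" by (simp add: h_def)
  ultimately obtain s where "t - d \<le> s" "s \<le> t" "h s = 0"
    using IVT[of h "t - d" 0 t] cont d0 by auto
  then show ?thesis by (intro exI[of _ s]) (auto simp: h_def)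
qed

theorem mainTheorem6:
  fixes r2 :: "real \<Rightarrow> real^3" and r1 :: "real^3" and t :: real
  assumes "admissible r2"
    and "(r1, t) \<in> regionG r2"
  shows "PhiMap r2 differentiable (at (vec4 t (r1$1) (r1$2) (r1$3)))
    \<and> det (jacobian (PhiMap r2) (at (vec4 t (r1$1) (r1$2) (r1$3))))
        = field_z r2 r1 t * (field_u r2 r1 t)^2 * (field_e r2 r1 t $ 3)"
proof -
  obtain v a j where der: "\<And>s. (r2 has_vector_derivative v s) (at s)"
    and vlt: "\<And>s. norm (v s) < 1"
    and Mb: "\<And>t1. \<exists>M<1. \<forall>s\<le>t1. norm (v s) \<le> M"
    using assms(1) unfolding admissible_def by blast
  have ex1: "\<exists>!\<tau>. \<tau> \<le> t' \<and> \<tau> = t' - norm (x - r2 \<tau>)" for x t'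
  proof -
    obtain M where M: "M < 1" "\<And>s. s \<le> t' \<Longrightarrow> norm (v s) \<le> M" using Mb[of t'] by blast
    show ?thesis using ret_exists[OF der M(2) M(1)] ret_unique[OF der M(2) M(1)] by blast
  qed
  have rt: "ret_time r2 x t' \<le> t' \<and> ret_time r2 x t' = t' - norm (x - r2 (ret_time r2 x t'))" for x t'
    unfolding ret_time_def by (rule theI'[OF ex1])
  have rtK: "ret_time r2 x (s + norm (x - r2 s)) = s" for x s
    unfolding ret_time_def by (rule the1_equality[OF ex1]) auto
  define \<tau>0 where "\<tau>0 = ret_time r2 r1 t"
  define y0 where "y0 = r1 - r2 \<tau>0"
  define T0 where "T0 = t - \<tau>0"
  define v0 where "v0 = v \<tau>0"
  define e where "e = field_e r2 r1 t"
  define u where "u = field_u r2 r1 t"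
  define z where "z = field_z r2 r1 t"
  have T0pos: "T0 > 0" using assms(2) by (simp add: regionG_def retT_def T0_def \<tau>0_def)
  have T0y: "T0 = norm y0" using rt[of r1 t] by (simp add: T0_def y0_def \<tau>0_def)
  have y0nz: "y0 \<noteq> 0" using T0pos T0y by auto
  have u_def': "u = 1 / T0" by (simp add: u_def field_u_def retT_def T0_def \<tau>0_def)
  have e_def': "e = u *\<^sub>R y0" by (simp add: e_def field_e_def u_def y0_def \<tau>0_def)
  have v0_eq: "field_v r2 r1 t = v0"
    unfolding field_v_def v0_def \<tau>0_def using vector_derivative_at[OF der] by blast
  have ev: "\<bar>e \<bullet> v0\<bar> < 1"
  proof -
    have "norm e = 1" using T0pos T0y by (simp add: e_def' u_def')
    then have "\<bar>e \<bullet> v0\<bar> \<le> norm v0" using Cauchy_Schwarz_ineq2[of e v0] by simp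
    then show ?thesis using vlt[of \<tau>0] by (simp add: v0_def)
  qed
  have z_def': "z = 1 / (1 - e \<bullet> v0)" by (simp add: z_def field_z_def e_def v0_eq)
  have z1: "z * (1 - e \<bullet> v0) = 1" using ev by (simp add: z_def')
  define q0 where "q0 = vec4 t (r1$1) (r1$2) (r1$3)"
  define p0 where "p0 = vec4 \<tau>0 (r1$1) (r1$2) (r1$3)"
  have sp_q0: "space_part q0 = r1" "space_part p0 = r1"
    by (simp_all add: q0_def p0_def vec_eq_iff forall_3 space_part_vec4)
  define K where "K = (\<lambda>p::real^4. vec4 (p$1 + norm (space_part p - r2 (p$1))) (p$2) (p$3) (p$4))"
  define K' where "K' = (\<lambda>dp::real^4. vec4 (dp$1 + (space_part dp - dp$1 *\<^sub>R v0) \<bullet> e) (dp$2) (dp$3) (dp$4))"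
  define g where "g = (\<lambda>q::real^4. vec4 (ret_time r2 (space_part q) (q$1)) (q$2) (q$3) (q$4))"
  define g' where "g' = (\<lambda>dq::real^4. vec4 (z * (dq$1 - e \<bullet> space_part dq)) (dq$2) (dq$3) (dq$4))"
  have Kp0: "K p0 = q0"
  proof -
    have h: "\<tau>0 + norm (r1 - r2 \<tau>0) = t" using T0y unfolding T0_def y0_def by linarith
    show ?thesis using h sp_q0(2) unfolding K_def p0_def q0_def by simp
  qed
  have cr2: "continuous_on UNIV r2"
    by (metis continuous_at_imp_continuous_on der has_vector_derivative_continuous)
  have contK: "continuous_on UNIV K"
    unfolding K_def vec4_alt
    by (intro continuous_intros continuous_on_compose2[OF cr2] linear_continuous_on
        bounded_linear_space_part) auto
  have gK: "g (K p) = p" for p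
  proof -
    have "space_part (K p) = space_part p" by (simp add: K_def vec_eq_iff forall_3)
    then show ?thesis by (simp add: g_def K_def rtK vec4_eta)
  qed
  have y0e: "y0 = norm y0 *\<^sub>R e"
    using T0pos T0y by (simp add: e_def' u_def')
  have ny0: "norm y0 > 0" using y0nz by simp
  have p01: "p0$1 = \<tau>0" by (simp add: p0_def)
  have d1: "((\<lambda>p::real^4. p$1) has_derivative (\<lambda>h. h$1)) (at p0)"
    by (rule bounded_linear.has_derivative[OF bounded_linear_vec_nth has_derivative_ident])
  have dr2: "((\<lambda>p::real^4. r2 (p$1)) has_derivative (\<lambda>h. h$1 *\<^sub>R v0)) (at p0)"
    using has_derivative_compose[OF d1, of r2 "\<lambda>h. h *\<^sub>R v0"] der[of \<tau>0] p01
    by (simp add: has_vector_derivative_def v0_def)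
  have dsp: "(space_part has_derivative space_part) (at p0)"
    using bounded_linear.has_derivative[OF bounded_linear_space_part has_derivative_ident] by simp
  have dy: "((\<lambda>p. space_part p - r2 (p$1)) has_derivative (\<lambda>h. space_part h - h$1 *\<^sub>R v0)) (at p0)"
    by (rule has_derivative_diff[OF dsp dr2])
  have yp0: "space_part p0 - r2 (p0$1) = y0" by (simp add: sp_q0 p01 y0_def)
  have sgn_e: "sgn y0 = e"
    using T0y by (simp add: sgn_div_norm e_def' u_def' divide_inverse_commute scaleR_conv_of_real)
  have hn: "(norm has_derivative (\<lambda>h. h \<bullet> e)) (at (space_part p0 - r2 (p0$1)))"
    using has_derivative_norm[OF y0nz] yp0 sgn_e by simp
  have dn: "((\<lambda>p. norm (space_part p - r2 (p$1))) has_derivative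
       (\<lambda>h. (space_part h - h$1 *\<^sub>R v0) \<bullet> e)) (at p0)"
    using has_derivative_compose[OF dy hn] by simp
  have derK: "(K has_derivative K') (at p0)"
    unfolding K_def K'_def
    by (intro has_derivative_vec4 has_derivative_add d1 dn
        bounded_linear.has_derivative[OF bounded_linear_vec_nth has_derivative_ident])
  have idK: "K' \<circ> g' = id"
  proof
    fix dq :: "real^4"
    define a where "a = z * (dq$1 - e \<bullet> space_part dq)"
    have sg: "space_part (vec4 a (dq$2) (dq$3) (dq$4)) = space_part dq" by (simp add: vec_eq_iff forall_3)
    have "a + (space_part dq - a *\<^sub>R v0) \<bullet> e = dq$1"
    proof -
      have "a + (space_part dq - a *\<^sub>R v0) \<bullet> e = a * (1 - e \<bullet> v0) + e \<bullet> space_part dq"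
        by (simp add: inner_diff_left inner_commute algebra_simps)
      also have "\<dots> = (dq$1 - e \<bullet> space_part dq) * (z * (1 - e \<bullet> v0)) + e \<bullet> space_part dq"
        by (simp add: a_def algebra_simps)
      also have "\<dots> = dq$1" using z1 by simp
      finally show ?thesis .
    qed
    then show "(K' \<circ> g') dq = id dq"
      by (simp add: K'_def g'_def sg a_def[symmetric] vec_eq_iff forall_4)
  qed
  have derg: "(g has_derivative g') (at q0)"
    using has_derivative_inverse_strong[OF open_UNIV UNIV_I contK, of g, OF gK derK idK] Kp0
    by simp
  define tf where "tf = (\<lambda>q::real^4. ret_time r2 (space_part q) (q$1))"
  define tf' where "tf' = (\<lambda>h::real^4. z * (h$1 - e \<bullet> space_part h))"
  have q01: "q0$1 = t" by (simp add: q0_def)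
  have tfq0: "tf q0 = \<tau>0" by (simp add: tf_def sp_q0 q01 \<tau>0_def)
  have dtf: "(tf has_derivative tf') (at q0)"
    using bounded_linear.has_derivative[OF bounded_linear_vec_nth derg, of 1]
    by (simp add: g_def g'_def tf_def tf'_def)
  have dq1: "((\<lambda>q::real^4. q$i) has_derivative (\<lambda>h. h$i)) (at q0)" for i
    by (rule bounded_linear.has_derivative[OF bounded_linear_vec_nth has_derivative_ident])
  have dT: "((\<lambda>q. q$1 - tf q) has_derivative (\<lambda>h. h$1 - tf' h)) (at q0)"
    by (rule has_derivative_diff[OF dq1 dtf])
  have Tq0: "q0$1 - tf q0 = T0" by (simp add: q01 tfq0 T0_def)
  have dr2t: "((\<lambda>q. r2 (tf q)) has_derivative (\<lambda>h. tf' h *\<^sub>R v0)) (at q0)"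
    using has_derivative_compose[OF dtf, of r2 "\<lambda>h. h *\<^sub>R v0"] der[of \<tau>0] tfq0
    by (simp add: has_vector_derivative_def v0_def)
  have dr2k: "((\<lambda>q. r2 (tf q) $ k) has_derivative (\<lambda>h. tf' h * v0 $ k)) (at q0)" for k
    using bounded_linear.has_derivative[OF bounded_linear_vec_nth dr2t, of k] by simp
  have dinv: "((\<lambda>q. inverse (q$1 - tf q)) has_derivative (\<lambda>h. - (u * (h$1 - tf' h) * u))) (at q0)"
    using Deriv.has_derivative_inverse[OF _ dT] Tq0 T0pos
    by (simp add: u_def' inverse_eq_divide)
  have ek: "y0 $ k = T0 * e $ k" for k
    using T0pos by (simp add: e_def' u_def')
  have dE: "((\<lambda>q. inverse (q$1 - tf q) * (q$i - r2 (tf q) $ k)) has_derivative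
      (\<lambda>h. u * (h$i - tf' h * v0$k) - u * e$k * (h$1 - tf' h))) (at q0)"
    if "q0$i = r1$k" for i k
  proof (rule has_derivative_eq_rhs[OF has_derivative_mult[OF dinv has_derivative_diff[OF dq1 dr2k]]])
    have "q0 $ i - r2 (tf q0) $ k = y0 $ k" using that by (simp add: tfq0 y0_def)
    then show "(\<lambda>h. inverse (q0 $ 1 - tf q0) * (h $ i - tf' h * v0 $ k) +
          - (u * (h $ 1 - tf' h) * u) * (q0 $ i - r2 (tf q0) $ k)) =
        (\<lambda>h. u * (h$i - tf' h * v0$k) - u * e$k * (h$1 - tf' h))"
      using T0pos by (auto simp: Tq0 u_def' ek fun_eq_iff field_simps)
  qed
  have Phi_eq: "PhiMap r2 = (\<lambda>q. vec4 (tf q) (q$1 - tf q)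
      (inverse (q$1 - tf q) * (q$2 - r2 (tf q) $ 1)) (inverse (q$1 - tf q) * (q$3 - r2 (tf q) $ 2)))"
    by (auto simp: fun_eq_iff PhiMap_def Let_def field_e_def field_u_def retT_def time_part_def tf_def
        inverse_eq_divide)
  define D where "D = (\<lambda>h::real^4. vec4 (tf' h) (h$1 - tf' h)
      (u * (h$2 - tf' h * v0$1) - u * e$1 * (h$1 - tf' h))
      (u * (h$3 - tf' h * v0$2) - u * e$2 * (h$1 - tf' h)))"
  have dPhi: "(PhiMap r2 has_derivative D) (at q0)"
    unfolding Phi_eq D_def
    by (intro has_derivative_vec4 dtf dT dE) (simp_all add: q0_def)
  have jac: "jacobian (PhiMap r2) (at q0) = matrix D"
    unfolding jacobian_def using frechet_derivative_at[OF dPhi] by simp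
  have "det (matrix D) = z * u^2 * e$3"
    by (simp add: det_4 matrix_def D_def tf'_def axis_def inner_vec_def sum_3 space_part_def
        algebra_simps power2_eq_square)
  then show ?thesis
    using dPhi jac unfolding q0_def[symmetric] by (auto simp: differentiable_def u_def z_def e_def)
qed

end
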